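(* Assume the Bellman setting below and hypotheses (H3) and (H4). Let $U$ be a solution of the Bellman problem. Then there exists a sequence $(P^\ell)_\ell$ in $\mathcal P$ such that $-A(P^\ell)U+y(P^\ell)\to0$ as $\ell\to\infty$ and $A(P^\ell)$ is a nonsingular M-matrix for every $\ell$.
   Context: Bellman setting: Let $M\ge 0$ be an integer and $\mathcal P=\mathcal P_0\times\cdots\times\mathcal P_M$ a product of nonempty sets; write $P=(P_0,\dots,P_M)\in\mathcal P$. Let $A:\mathcal P\to\mathbb R^{(M+1)\times(M+1)}$ and $y:\mathcal P\to\mathbb R^{M+1}$ be row-decoupled: for each $i$, the $i$-th row of $A(P)$ and the $i$-th entry of $y(P)$ depend only on $P_i$. Inequalities between vectors are entrywise and suprema of families of vectors are entrywise. The Bellman problem is to find $U$ with $\sup_{P\in\mathcal P}\{-A(P)U+y(P)\}=0$. Row $i$ of a matrix $(a_{ij})$ is strictly diagonally dominant (s.d.d.) if $|a_{ii}|>\sum_{j\ne i}|a_{ij}|$, weakly diagonally dominant (w.d.d.) if $|a_{ii}|\ge\sum_{j\ne i}|a_{ij}|$; a matrix is w.d.d. if all rows are. A Z-matrix is a real matrix with nonpositive off-diagonal entries; a nonsingular M-matrix is a Z-matrix that is nonsingular with entrywise nonnegative inverse. (H3): for each $P$, $A(P)$ is a w.d.d. Z-matrix with nonnegative diagonal entries, and $[A(P)]_{ii}\le1$ whenever row $i$ of $A(P)$ is not s.d.d. Define $[\hat y(P)]_i=[y(P)]_i$ if row $i$ of $A(P)$ is not s.d.d. and $[\hat y(P)]_i=-\infty$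 otherwise, and the operator $\mathbb M$ on vectors with entries in $[-\infty,\infty)$ by $[\mathbb M X]_i=\sup_{P\in\mathcal P}\{(1-[A(P)]_{ii})X_i-\sum_{j\ne i}[A(P)]_{ij}X_j+[\hat y(P)]_i\}$, with the conventions $0\cdot(-\infty)=0$ and that any sum containing $-\infty$ equals $-\infty$; $\mathbb M^0=I$, $\mathbb M^k=\mathbb M\circ\mathbb M^{k-1}$. (H4): for each $U\in\mathbb R^{M+1}$ and each $i$ there exist integers $0\le m_1<m_2$ with $[\mathbb M^{m_1}U]_i>[\mathbb M^{m_2}U]_i$. *)

theory Defs
  imports "HOL-Analysis.Analysis" "HOL-Library.Extended_Real"
begin

text \<open>Indices 0..M are modelled by a finite type 'n (so M+1 = CARD('n)).
  A policy P in the product set is a function 'n => 'p with P i in Ps i.\<close>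

definition policies :: "('n \<Rightarrow> 'p set) \<Rightarrow> ('n \<Rightarrow> 'p) set" where
  "policies Ps = {P. \<forall>i. P i \<in> Ps i}"

definition sdd_row :: "real^'n^'n \<Rightarrow> 'n::finite \<Rightarrow> bool" where
  "sdd_row A i \<longleftrightarrow> (\<Sum>j\<in>UNIV - {i}. \<bar>A$i$j\<bar>) < \<bar>A$i$i\<bar>"

definition wdd_row :: "real^'n^'n \<Rightarrow> 'n::finite \<Rightarrow> bool" where
  "wdd_row A i \<longleftrightarrow> (\<Sum>j\<in>UNIV - {i}. \<bar>A$i$j\<bar>) \<le> \<bar>A$i$i\<bar>"

definition Z_matrix :: "real^'n^'n \<Rightarrow> bool" where
  "Z_matrix A \<longleftrightarrow> (\<forall>i j. i \<noteq> j \<longrightarrow> A$i$j \<le> 0)"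

definition nonsingular_M_matrix :: "real^'n^'n \<Rightarrow> bool" where
  "nonsingular_M_matrix A \<longleftrightarrow>
     Z_matrix A \<and> invertible A \<and> (\<forall>i j. 0 \<le> matrix_inv A $ i $ j)"

definition yhat :: "(('n \<Rightarrow> 'p) \<Rightarrow> real^'n^'n) \<Rightarrow> (('n \<Rightarrow> 'p) \<Rightarrow> real^'n)
    \<Rightarrow> ('n \<Rightarrow> 'p) \<Rightarrow> 'n::finite \<Rightarrow> ereal" where
  "yhat A y P i = (if sdd_row (A P) i then -\<infinity> else ereal (y P $ i))"

text \<open>The expression inside the supremum defining the operator M, with the
  conventions 0 * (-inf) = 0 (built into ereal) and that any sum containing
  -inf equals -inf.\<close>
definition Mterm :: "(('n \<Rightarrow> 'p) \<Rightarrow> real^'n^'n) \<Rightarrow> (('n \<Rightarrow> 'p) \<Rightarrow> real^'n)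
    \<Rightarrow> ('n \<Rightarrow> 'p) \<Rightarrow> ('n \<Rightarrow> ereal) \<Rightarrow> 'n::finite \<Rightarrow> ereal" where
  "Mterm A y P X i =
    (let ts = (\<lambda>j. ereal (if j = i then 1 - A P $ i $ i else - A P $ i $ j) * X j)
     in if yhat A y P i = -\<infinity> \<or> (\<exists>j. ts j = -\<infinity>) then -\<infinity>
        else (\<Sum>j\<in>UNIV. ts j) + yhat A y P i)"

definition Mop :: "('n \<Rightarrow> 'p set) \<Rightarrow> (('n \<Rightarrow> 'p) \<Rightarrow> real^'n^'n) \<Rightarrow> (('n \<Rightarrow> 'p) \<Rightarrow> real^'n)
    \<Rightarrow> ('n \<Rightarrow> ereal) \<Rightarrow> 'n::finite \<Rightarrow> ereal" where
  "Mop Ps A y X i = (SUP P\<in>policies Ps. Mterm A y P X i)"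

end

theory Submission
  imports Defs
begin

lemma mono_matrix:
  fixes A :: "real^'n^'n::finite" and x :: "real^'n"
  assumes Z: "Z_matrix A" and wdd: "\<And>i. wdd_row A i" and diag: "\<And>i. 0 \<le> A$i$i"
    and chain: "\<And>J. J \<noteq> {} \<Longrightarrow> (\<exists>k\<in>J. sdd_row A k \<or> (\<exists>j. j\<notin>J \<and> A$k$j \<noteq> 0))"
    and Ax: "\<And>i. 0 \<le> (A *v x)$i"
  shows "0 \<le> x$i"
proof (rule ccontr)
  assume neg: "\<not> 0 \<le> x$i"
  define m where "m = Min (range (\<lambda>j. x$j))"
  have mle: "m \<le> x$j" for j unfolding m_def by simp
  have m0: "m < 0" using mle[of i] neg by simp
  have "m \<in> range (\<lambda>j. x$j)" unfolding m_def by (rule Min_in) auto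
  then obtain i0 where i0: "x$i0 = m" by auto
  define J where "J = {j. x$j = m}"
  have "J \<noteq> {}" using i0 J_def by auto
  from chain[OF this] obtain k where kJ: "k \<in> J"
    and kc: "sdd_row A k \<or> (\<exists>j. j\<notin>J \<and> A$k$j \<noteq> 0)" by blast
  have xk: "x$k = m" using kJ J_def by simp
  have term_le: "A$k$j * x$j \<le> A$k$j * m" for j
  proof (cases "j = k")
    case True then show ?thesis using xk by simp
  next
    case False
    then have "A$k$j \<le> 0" using Z unfolding Z_matrix_def by auto
    then show ?thesis using mle[of j] by (simp add: mult_left_mono_neg)
  qed
  have rsum: "(\<Sum>j\<in>UNIV - {k}. \<bar>A$k$j\<bar>) = - (\<Sum>j\<in>UNIV - {k}. A$k$j)"
  proof -
    have "(\<Sum>j\<in>UNIV - {k}. \<bar>A$k$j\<bar>) = (\<Sum>j\<in>UNIV - {k}. - A$k$j)"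
      using Z unfolding Z_matrix_def by (intro sum.cong) auto
    then show ?thesis by (simp add: sum_negf)
  qed
  have tot: "(\<Sum>j\<in>UNIV. A$k$j) = A$k$k + (\<Sum>j\<in>UNIV - {k}. A$k$j)"
    by (simp add: sum.remove)
  have Axk: "(A *v x)$k = (\<Sum>j\<in>UNIV. A$k$j * x$j)"
    by (simp add: matrix_vector_mult_def)
  have "(\<Sum>j\<in>UNIV. A$k$j * m) = m * (\<Sum>j\<in>UNIV. A$k$j)"
    by (simp add: sum_distrib_left mult.commute)
  have dd: "A$k$k + (\<Sum>j\<in>UNIV - {k}. A$k$j) \<ge> 0"
    using wdd[of k] diag[of k] rsum unfolding wdd_row_def by simp
  have up: "m * (\<Sum>j\<in>UNIV. A$k$j) \<le> 0"
    using tot dd m0 by (simp add: mult_nonpos_nonneg)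
  from kc show False
  proof
    assume "sdd_row A k"
    then have "A$k$k + (\<Sum>j\<in>UNIV - {k}. A$k$j) > 0"
      using diag[of k] rsum unfolding sdd_row_def by simp
    then have "m * (\<Sum>j\<in>UNIV. A$k$j) < 0" using tot m0 by (simp add: mult_neg_pos)
    moreover have "(\<Sum>j\<in>UNIV. A$k$j * x$j) \<le> (\<Sum>j\<in>UNIV. A$k$j * m)"
      by (intro sum_mono term_le)
    ultimately show False using Ax[of k] Axk
      \<open>(\<Sum>j\<in>UNIV. A$k$j * m) = m * (\<Sum>j\<in>UNIV. A$k$j)\<close> by linarith
  next
    assume "\<exists>j. j\<notin>J \<and> A$k$j \<noteq> 0"
    then obtain j where j: "j \<notin> J" "A$k$j \<noteq> 0" by blast
    have "k \<noteq> j" using j kJ by auto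
    then have "A$k$j \<le> 0" using Z[unfolded Z_matrix_def, rule_format] by simp
    then have "A$k$j < 0" using j(2) by linarith
    moreover have "m < x$j" using j mle[of j] J_def by force
    ultimately have "A$k$j * x$j < A$k$j * m" by (simp add: mult_strict_left_mono_neg)
    then have "(\<Sum>j\<in>UNIV. A$k$j * x$j) < (\<Sum>j\<in>UNIV. A$k$j * m)"
      by (intro sum_strict_mono_ex1) (auto intro: term_le)
    then show False using Ax[of k] Axk up
      \<open>(\<Sum>j\<in>UNIV. A$k$j * m) = m * (\<Sum>j\<in>UNIV. A$k$j)\<close> by linarith
  qed
qed

lemma M_matrix_crit:
  fixes A :: "real^'n^'n::finite"
  assumes Z: "Z_matrix A" and wdd: "\<And>i. wdd_row A i" and diag: "\<And>i. 0 \<le> A$i$i"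
    and chain: "\<And>J. J \<noteq> {} \<Longrightarrow> (\<exists>k\<in>J. sdd_row A k \<or> (\<exists>j. j\<notin>J \<and> A$k$j \<noteq> 0))"
  shows "nonsingular_M_matrix A"
proof -
  have mono: "0 \<le> x$i" if "\<And>i. 0 \<le> (A *v x)$i" for x i
    using mono_matrix[OF Z wdd diag chain that] .
  have ker: "x = 0" if "A *v x = 0" for x
  proof -
    have e: "A *v (0 - x) = A *v 0 - A *v x" by (rule matrix_vector_mult_diff_distrib)
    have "A *v (0 - x) = 0" using that e by simp
    have "0 \<le> x$i" for i using mono[of x i] that by simp
    moreover have "0 \<le> (0 - x)$i" for i using mono[of "0 - x" i] \<open>A *v (0 - x) = 0\<close> by simp
    ultimately show ?thesis by (simp add: vec_eq_iff order_antisym)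
  qed
  have inv: "invertible A"
    unfolding invertible_left_inverse using ker matrix_left_invertible_ker by blast
  then have ex: "\<exists>A'. A ** A' = mat 1 \<and> A' ** A = mat 1" unfolding invertible_def .
  have "A ** matrix_inv A = mat 1 \<and> matrix_inv A ** A = mat 1"
    unfolding matrix_inv_def using someI_ex[OF ex] .
  then have r: "A ** matrix_inv A = mat 1" by blast
  have "0 \<le> matrix_inv A $ i $ j" for i j
  proof -
    have e: "A *v (matrix_inv A *v axis j 1) = axis j 1"
      by (simp add: matrix_vector_mul_assoc r)
    have "0 \<le> (matrix_inv A *v axis j 1) $ i"
      using mono[of "matrix_inv A *v axis j 1" i] e by (simp add: axis_def)
    then show ?thesis by (simp add: matrix_vector_mult_basis column_def)
  qed
  then show ?thesis using Z inv unfolding nonsingular_M_matrix_def by blast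
qed


lemma csum:
  fixes B :: "real^'n^'n::finite"
  shows "(\<Sum>j\<in>UNIV. (if j = i then 1 - B$i$i else - B$i$j) * U$j) = U$i - (B *v U)$i"
proof -
  have "(\<Sum>j\<in>UNIV. (if j = i then 1 - B$i$i else - B$i$j) * U$j)
      = (\<Sum>j\<in>UNIV. (if j = i then U$j else 0) - B$i$j * U$j)"
    by (intro sum.cong) (auto simp: algebra_simps)
  also have "\<dots> = U$i - (\<Sum>j\<in>UNIV. B$i$j * U$j)"
    by (simp add: sum_subtractf)
  finally show ?thesis by (simp add: matrix_vector_mult_def)
qed

lemma cone:
  fixes B :: "real^'n^'n::finite"
  assumes Z: "Z_matrix B" and w: "wdd_row B i" and ns: "\<not> sdd_row B i" and d: "0 \<le> B$i$i"
  shows "(\<Sum>j\<in>UNIV. (if j = i then 1 - B$i$i else - B$i$j)) = 1"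
proof -
  have r: "(\<Sum>j\<in>UNIV - {i}. \<bar>B$i$j\<bar>) = (\<Sum>j\<in>UNIV - {i}. - B$i$j)"
    using Z unfolding Z_matrix_def by (intro sum.cong) auto
  have eq: "(\<Sum>j\<in>UNIV - {i}. - B$i$j) = B$i$i"
    using w ns d r unfolding wdd_row_def sdd_row_def by simp
  have "(\<Sum>j\<in>UNIV. (if j = i then 1 - B$i$i else - B$i$j))
      = (1 - B$i$i) + (\<Sum>j\<in>UNIV - {i}. (if j = i then 1 - B$i$i else - B$i$j))"
    by (subst sum.remove[of UNIV i]) auto
  also have "(\<Sum>j\<in>UNIV - {i}. (if j = i then 1 - B$i$i else - B$i$j)) = (\<Sum>j\<in>UNIV - {i}. - B$i$j)"
    by (intro sum.cong) auto
  finally show ?thesis using eq by simp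
qed

lemma Mterm_upper:
  assumes Z: "Z_matrix (A P)" and le1: "\<not> sdd_row (A P) i \<longrightarrow> A P$i$i \<le> 1"
    and X: "\<And>j. X j \<le> ereal (U$j)"
  shows "Mterm A y P X i \<le> ereal ((y P - A P *v U)$i + U$i)"
proof -
  define c where "c j = (if j = i then 1 - A P$i$i else - A P$i$j)" for j
  show ?thesis
  proof (cases "yhat A y P i = -\<infinity> \<or> (\<exists>j. ereal (c j) * X j = -\<infinity>)")
    case True then show ?thesis unfolding Mterm_def Let_def c_def by auto
  next
    case False
    then have ns: "\<not> sdd_row (A P) i" and yh: "yhat A y P i = ereal (y P $ i)"
      unfolding yhat_def by (auto split: if_splits)
    have c0: "0 \<le> c j" for j
      using le1 ns Z unfolding c_def Z_matrix_def by auto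
    have "(\<Sum>j\<in>UNIV. ereal (c j) * X j) \<le> (\<Sum>j\<in>UNIV. ereal (c j * U$j))"
    proof (intro sum_mono)
      fix j
      have "ereal (c j) * X j \<le> ereal (c j) * ereal (U$j)"
        using X[of j] c0[of j] by (intro ereal_mult_left_mono) auto
      then show "ereal (c j) * X j \<le> ereal (c j * U$j)" by simp
    qed
    also have "\<dots> = ereal (U$i - (A P *v U)$i)"
      unfolding sum_ereal c_def by (simp add: csum)
    finally have s: "(\<Sum>j\<in>UNIV. ereal (c j) * X j) \<le> ereal (U$i - (A P *v U)$i)" .
    have "Mterm A y P X i = (\<Sum>j\<in>UNIV. ereal (c j) * X j) + ereal (y P $ i)"
      using False yh unfolding Mterm_def Let_def c_def by auto
    also have "\<dots> \<le> ereal (U$i - (A P *v U)$i) + ereal (y P $ i)"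
      using s by (intro add_mono) auto
    finally show ?thesis by (simp add: algebra_simps)
  qed
qed

lemma Mterm_lower:
  assumes Z: "Z_matrix (A P)" and w: "wdd_row (A P) i" and ns: "\<not> sdd_row (A P) i"
    and d: "0 \<le> A P$i$i" and le1: "A P$i$i \<le> 1"
    and iJ: "i \<in> J" and cl: "\<And>j. j \<notin> J \<Longrightarrow> A P$i$j = 0"
    and X: "\<And>j. j \<in> J \<Longrightarrow> ereal (U$j - t) \<le> X j"
  shows "ereal ((y P - A P *v U)$i + U$i - t) \<le> Mterm A y P X i"
proof -
  define c where "c j = (if j = i then 1 - A P$i$i else - A P$i$j)" for j
  have c0: "0 \<le> c j" for j
    using le1 Z unfolding c_def Z_matrix_def by auto
  have tl: "ereal (c j * (U$j - t)) \<le> ereal (c j) * X j" for j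
  proof (cases "j \<in> J")
    case True
    have "ereal (c j) * ereal (U$j - t) \<le> ereal (c j) * X j"
      using X[OF True] c0[of j] by (intro ereal_mult_left_mono) auto
    then show ?thesis by simp
  next
    case False
    then have "j \<noteq> i" using iJ by auto
    then have "c j = 0" using cl[OF False] unfolding c_def by simp
    then show ?thesis by (simp add: zero_ereal_def[symmetric])
  qed
  have nm: "ereal (c j) * X j \<noteq> -\<infinity>" for j
    using tl[of j] by auto
  have yh: "yhat A y P i = ereal (y P $ i)" using ns unfolding yhat_def by simp
  have "Mterm A y P X i = (\<Sum>j\<in>UNIV. ereal (c j) * X j) + ereal (y P $ i)"
    using nm yh unfolding Mterm_def Let_def c_def by auto
  moreover have "(\<Sum>j\<in>UNIV. ereal (c j * (U$j - t))) \<le> (\<Sum>j\<in>UNIV. ereal (c j) * X j)"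
    by (intro sum_mono tl)
  moreover have "(\<Sum>j\<in>UNIV. c j * (U$j - t)) = U$i - (A P *v U)$i - t"
  proof -
    have "(\<Sum>j\<in>UNIV. c j * (U$j - t)) = (\<Sum>j\<in>UNIV. c j * U$j) - t * (\<Sum>j\<in>UNIV. c j)"
      by (simp add: algebra_simps sum_subtractf sum_distrib_left)
    moreover have "(\<Sum>j\<in>UNIV. c j) = 1" unfolding c_def using cone[OF Z w ns d] .
    moreover have "(\<Sum>j\<in>UNIV. c j * U$j) = U$i - (A P *v U)$i" unfolding c_def by (rule csum)
    ultimately show ?thesis by simp
  qed
  ultimately have "ereal (U$i - (A P *v U)$i - t) + ereal (y P $ i) \<le> Mterm A y P X i"
    by (metis add_mono order_refl sum_ereal)
  then show ?thesis by (simp add: algebra_simps)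
qed


theorem lemma3p9:
  fixes Ps :: "'n::finite \<Rightarrow> 'p set"
    and A :: "('n \<Rightarrow> 'p) \<Rightarrow> real^'n^'n"
    and y :: "('n \<Rightarrow> 'p) \<Rightarrow> real^'n"
    and U :: "real^'n"
  assumes nonempty: "\<And>i. Ps i \<noteq> {}"
    and row_decoupled: "\<And>P Q i. P i = Q i \<Longrightarrow> A P $ i = A Q $ i \<and> y P $ i = y Q $ i"
    and H3: "\<And>P i. P \<in> policies Ps \<Longrightarrow>
        wdd_row (A P) i \<and> Z_matrix (A P) \<and> 0 \<le> A P $ i $ i
        \<and> (\<not> sdd_row (A P) i \<longrightarrow> A P $ i $ i \<le> 1)"
    and H4: "\<And>V i. \<exists>m1 m2. m1 < m2 \<and>
        ((Mop Ps A y ^^ m2) (\<lambda>j. ereal (V $ j)) i) < ((Mop Ps A y ^^ m1) (\<lambda>j. ereal (V $ j)) i)"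
    and bellman: "\<And>i. (SUP P\<in>policies Ps. ereal ((y P - A P *v U) $ i)) = 0"
  shows "\<exists>Pl :: nat \<Rightarrow> ('n \<Rightarrow> 'p). (\<forall>l. Pl l \<in> policies Ps)
           \<and> ((\<lambda>l. y (Pl l) - A (Pl l) *v U) \<longlonglongrightarrow> 0)
           \<and> (\<forall>l. nonsingular_M_matrix (A (Pl l)))"
proof -
  define val where "val P i = (y P - A P *v U)$i" for P i
  define u where "u = (\<lambda>j. ereal (U$j))"
  define X where "X k = (Mop Ps A y ^^ k) u" for k
  have XS: "X (Suc k) j = (SUP P\<in>policies Ps. Mterm A y P (X k) j)" for k j
    unfolding X_def by (simp add: Mop_def)
  have val_le: "val P i \<le> 0" if "P \<in> policies Ps" for P i
  proof -
    have "ereal (val P i) \<le> (SUP P\<in>policies Ps. ereal ((y P - A P *v U) $ i))"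
      unfolding val_def using that by (rule SUP_upper)
    then show ?thesis using bellman[of i] by simp
  qed
  have near: "\<exists>P\<in>policies Ps. - e < val P i" if "e > 0" for e i
  proof -
    have "ereal (- e) < (SUP P\<in>policies Ps. ereal ((y P - A P *v U) $ i))"
      using bellman[of i] that by simp
    then show ?thesis unfolding less_SUP_iff val_def by auto
  qed
  have dec: "val P i = val Q i" if "P i = Q i" for P Q i
    using row_decoupled[of P i Q, OF that] unfolding val_def by (simp add: matrix_vector_mult_def)
  have comb: "\<exists>P\<in>policies Ps. \<forall>i. - e < val P i" if "e > 0" for e
  proof -
    from near[OF that] have "\<forall>i. \<exists>Q. Q \<in> policies Ps \<and> - e < val Q i" by blast
    then obtain Qf where Qf: "\<And>i. Qf i \<in> policies Ps \<and> - e < val (Qf i) i" by metis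
    define P where "P j = Qf j j" for j
    have "P \<in> policies Ps" using Qf unfolding P_def policies_def by auto
    moreover have "- e < val P i" for i
      using Qf[of i] dec[of P i "Qf i"] unfolding P_def by simp
    ultimately show ?thesis by blast
  qed
  have Xle: "X k j \<le> u j" for k j
  proof (induction k arbitrary: j)
    case 0 then show ?case by (simp add: X_def)
  next
    case (Suc k)
    show ?case unfolding XS
    proof (rule SUP_least)
      fix P assume P: "P \<in> policies Ps"
      have "Mterm A y P (X k) j \<le> ereal ((y P - A P *v U)$j + U$j)"
        using H3[OF P, of j] Suc.IH unfolding u_def by (intro Mterm_upper) auto
      also have "\<dots> \<le> u j" using val_le[OF P, of j] unfolding val_def u_def by simp
      finally show "Mterm A y P (X k) j \<le> u j" .
    qed
  qed
  have gap: "\<exists>p. snd p > 0 \<and> X (fst p) i < ereal (U$i - real (fst p) * snd p)" for i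
  proof -
    obtain m1 m2 where "m1 < m2" and lt: "X m2 i < X m1 i"
      using H4[of U i] unfolding X_def u_def by blast
    then have lt2: "X m2 i < ereal (U$i)" using Xle[of m1 i] unfolding u_def by simp
    show ?thesis
    proof (cases "X m2 i")
      case (real r)
      then have rU: "r < U$i" using lt2 by simp
      define e where "e = (U$i - r) / (real m2 + 1)"
      have e0: "e > 0" using rU unfolding e_def by simp
      have "real m2 * e < U$i - r"
      proof -
        have "real m2 * e = (U$i - r) * (real m2 / (real m2 + 1))"
          unfolding e_def by simp
        also have "\<dots> < (U$i - r) * 1"
          using rU by (intro mult_strict_left_mono) auto
        finally show ?thesis by simp
      qed
      then have "X m2 i < ereal (U$i - real m2 * e)" using real by simp
      then show ?thesis using e0 by (intro exI[of _ "(m2, e)"]) simp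
    next
      case PInf then show ?thesis using lt2 by simp
    next
      case MInf then show ?thesis by (intro exI[of _ "(m2, 1::real)"]) simp
    qed
  qed
  then obtain f where f: "\<And>i. snd (f i) > 0 \<and> X (fst (f i)) i < ereal (U$i - real (fst (f i)) * snd (f i))"
    by metis
  define kf where "kf i = fst (f i)" for i
  define ef where "ef i = snd (f i)" for i
  define e0 where "e0 = Min (range ef)"
  have e0pos: "e0 > 0"
  proof -
    have "e0 \<in> range ef" unfolding e0_def by (rule Min_in) auto
    then show ?thesis using f unfolding ef_def by auto
  qed
  have e0le: "e0 \<le> ef i" for i unfolding e0_def by simp
  define el where "el l = min e0 (inverse (real (Suc l)))" for l
  have elpos: "el l > 0" for l unfolding el_def using e0pos by simp
  have "\<forall>l. \<exists>P\<in>policies Ps. \<forall>i. - el l < val P i" using comb elpos by blast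
  then obtain Pl where Pl: "\<And>l. Pl l \<in> policies Ps" and Plv: "\<And>l i. - el l < val (Pl l) i"
    by metis
  have conv: "(\<lambda>l. y (Pl l) - A (Pl l) *v U) \<longlonglongrightarrow> 0"
  proof (rule vec_tendstoI)
    fix i
    have "(\<lambda>l. val (Pl l) i) \<longlonglongrightarrow> 0"
    proof (rule tendsto_sandwich[of "\<lambda>l. - inverse (real (Suc l))" _ _ "\<lambda>l. 0"])
      show "\<forall>\<^sub>F l in sequentially. - inverse (real (Suc l)) \<le> val (Pl l) i"
        using Plv unfolding el_def by (intro always_eventually allI) (smt (verit) min.cobounded2)
      show "\<forall>\<^sub>F l in sequentially. val (Pl l) i \<le> 0"
        using val_le[OF Pl] by (intro always_eventually allI) auto
      show "(\<lambda>l. - inverse (real (Suc l))) \<longlonglongrightarrow> 0"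
        using tendsto_minus[OF LIMSEQ_inverse_real_of_nat] by simp
      show "(\<lambda>l. 0::real) \<longlonglongrightarrow> 0" by simp
    qed
    then show "((\<lambda>l. (y (Pl l) - A (Pl l) *v U) $ i) \<longlongrightarrow> (0::real^'n) $ i) sequentially"
      unfolding val_def by simp
  qed
  have Mm: "nonsingular_M_matrix (A (Pl l))" for l
  proof (rule M_matrix_crit)
    show "Z_matrix (A (Pl l))" using H3[OF Pl] by blast
    show "wdd_row (A (Pl l)) i" for i using H3[OF Pl] by blast
    show "0 \<le> A (Pl l) $ i $ i" for i using H3[OF Pl] by blast
    fix J :: "'n set" assume Jne: "J \<noteq> {}"
    show "\<exists>k\<in>J. sdd_row (A (Pl l)) k \<or> (\<exists>j. j \<notin> J \<and> A (Pl l) $ k $ j \<noteq> 0)"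
    proof (rule ccontr)
      assume "\<not> ?thesis"
      then have ns: "\<And>k. k \<in> J \<Longrightarrow> \<not> sdd_row (A (Pl l)) k"
        and cl: "\<And>k j. k \<in> J \<Longrightarrow> j \<notin> J \<Longrightarrow> A (Pl l) $ k $ j = 0" by auto
      have low: "\<forall>j\<in>J. ereal (U$j - real n * el l) \<le> X n j" for n
      proof (induction n)
        case 0 then show ?case by (simp add: X_def u_def)
      next
        case (Suc n)
        show ?case
        proof
          fix j assume jJ: "j \<in> J"
          have h3: "wdd_row (A (Pl l)) j \<and> Z_matrix (A (Pl l)) \<and> 0 \<le> A (Pl l) $ j $ j
            \<and> (\<not> sdd_row (A (Pl l)) j \<longrightarrow> A (Pl l) $ j $ j \<le> 1)" using H3[OF Pl] .
          have "ereal ((y (Pl l) - A (Pl l) *v U)$j + U$j - real n * el l) \<le> Mterm A y (Pl l) (X n) j"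
            using h3 ns[OF jJ] jJ cl[OF jJ] Suc.IH by (intro Mterm_lower[where J=J]) auto
          also have "\<dots> \<le> X (Suc n) j" unfolding XS using Pl by (rule SUP_upper)
          finally have "ereal (val (Pl l) j + U$j - real n * el l) \<le> X (Suc n) j"
            unfolding val_def .
          moreover have "U$j - real (Suc n) * el l \<le> val (Pl l) j + U$j - real n * el l"
            using Plv[of l j] by (simp add: algebra_simps)
          ultimately show "ereal (U$j - real (Suc n) * el l) \<le> X (Suc n) j"
            using order_trans ereal_less_eq(3) by blast
        qed
      qed
      obtain i where iJ: "i \<in> J" using Jne by blast
      have "el l \<le> ef i" using e0le[of i] unfolding el_def by simp
      then have "real (kf i) * el l \<le> real (kf i) * ef i" by (simp add: mult_left_mono)
      then have "ereal (U$i - real (kf i) * ef i) \<le> ereal (U$i - real (kf i) * el l)" by simp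
      also have "\<dots> \<le> X (kf i) i" using low[of "kf i"] iJ by blast
      finally show False using f[of i] unfolding kf_def ef_def using not_le by blast
    qed
  qed
  show ?thesis using Pl conv Mm by blast
qed

end
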